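(* Let $m>0$, $\delta>0$, and $\varphi_{\mathrm{lead}}(M)=-\frac{16\pi^2}{\log\left(\frac{M\delta}{4m^2}\right)^2+\pi^2}$ for $M\ge4m^2$. For $t>0$ and $\mathbf p\in\mathbb{R}^3$ define the (improper) integral $$C(t,\mathbf p)=-\lim_{R\to\infty}\int_{4m^2}^R\varphi_{\mathrm{lead}}(M)\frac{\sin(\omega_Mt)}{\omega_M}dM,\qquad\omega_M=\sqrt{|\mathbf p|^2+M}.$$ Then there is a constant $C_0>0$ independent of $\mathbf p$ such that $|C(t,\mathbf p)|\le C_0/t$ for all $t>0$, and $t\mapsto C(t,\mathbf p)$ is integrable near $t=0$ with $\sup_{\mathbf p\in\mathbb{R}^3}\int_0^{\tau}|C(t,\mathbf p)|dt<\infty$ for some $\tau>0$. *)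

theory Defs
  imports "HOL-Analysis.Analysis"
begin

definition phi_lead :: "real \<Rightarrow> real \<Rightarrow> real \<Rightarrow> real" where
  "phi_lead m \<delta> M = - (16 * pi\<^sup>2) / ((ln (M * \<delta> / (4 * m\<^sup>2)))\<^sup>2 + pi\<^sup>2)"

definition omega :: "real ^ 3 \<Rightarrow> real \<Rightarrow> real" where
  "omega p M = sqrt ((norm p)\<^sup>2 + M)"

definition C_trunc :: "real \<Rightarrow> real \<Rightarrow> real \<Rightarrow> real ^ 3 \<Rightarrow> real \<Rightarrow> real" where
  "C_trunc m \<delta> t p R =
     integral {4 * m\<^sup>2..R} (\<lambda>M. phi_lead m \<delta> M * sin (omega p M * t) / omega p M)"

definition C_fun :: "real \<Rightarrow> real \<Rightarrow> real \<Rightarrow> real ^ 3 \<Rightarrow> real" where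
  "C_fun m \<delta> t p = - Lim at_top (\<lambda>R. C_trunc m \<delta> t p R)"

end

theory Submission imports Defs "HOL-Real_Asymp.Real_Asymp" begin

definition dphi :: "real \<Rightarrow> real \<Rightarrow> real \<Rightarrow> real" where
  "dphi m \<delta> M = 32 * pi\<^sup>2 * ln (M * \<delta> / (4 * m\<^sup>2)) / (M * ((ln (M * \<delta> / (4 * m\<^sup>2)))\<^sup>2 + pi\<^sup>2)\<^sup>2)"

definition ff :: "real \<Rightarrow> real \<Rightarrow> real \<Rightarrow> real ^ 3 \<Rightarrow> real \<Rightarrow> real" where
  "ff m \<delta> t p M = phi_lead m \<delta> M * sin (omega p M * t) / omega p M"

definition GG :: "real \<Rightarrow> real \<Rightarrow> real \<Rightarrow> real ^ 3 \<Rightarrow> real \<Rightarrow> real" where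
  "GG m \<delta> t p M = -(2/t) * phi_lead m \<delta> M * cos (omega p M * t)"

lemma phi_bounds: "-16 \<le> phi_lead m \<delta> M" "phi_lead m \<delta> M \<le> 0"
proof -
  let ?L = "(ln (M * \<delta> / (4 * m\<^sup>2)))\<^sup>2"
  have p: "pi\<^sup>2 > 0" by simp
  have d: "?L + pi\<^sup>2 \<ge> pi\<^sup>2" by simp
  have "16 * pi\<^sup>2 / (?L + pi\<^sup>2) \<le> 16 * pi\<^sup>2 / pi\<^sup>2"
    by (rule divide_left_mono) (use d p in \<open>auto intro!: mult_pos_pos add_nonneg_pos\<close>)
  then show "-16 \<le> phi_lead m \<delta> M" by (simp add: phi_lead_def)
  show "phi_lead m \<delta> M \<le> 0" unfolding phi_lead_def
    by (intro divide_nonpos_pos) (auto simp: add_nonneg_pos)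
qed

lemma phi_deriv:
  assumes "m > 0" "\<delta> > 0" "M > 0"
  shows "(phi_lead m \<delta> has_real_derivative dphi m \<delta> M) (at M)"
proof -
  have "((\<lambda>M. - (16 * pi\<^sup>2) / ((ln (M * \<delta> / (4 * m\<^sup>2)))\<^sup>2 + pi\<^sup>2)) has_real_derivative dphi m \<delta> M) (at M)"
    using assms
    using assms
    by (auto intro!: derivative_eq_intros simp: dphi_def power2_eq_square mult_ac)
  then show ?thesis unfolding phi_lead_def[abs_def] .
qed

lemma omega_pos: "M > 0 \<Longrightarrow> omega p M > 0"
  unfolding omega_def by (intro real_sqrt_gt_zero) (simp add: add_nonneg_pos)

lemma omega_ge: "M > 0 \<Longrightarrow> sqrt M \<le> omega p M"
  unfolding omega_def by simp

lemma omega_deriv: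
  assumes "M > 0"
  shows "(omega p has_real_derivative 1 / (2 * omega p M)) (at M)"
proof -
  have "(norm p)\<^sup>2 \<ge> 0" by simp
  then have pos: "(norm p)\<^sup>2 + M > 0" using assms by linarith
  have d1: "((\<lambda>M. (norm p)\<^sup>2 + M) has_real_derivative 1) (at M)"
    using DERIV_add[OF DERIV_const DERIV_ident, of "(norm p)\<^sup>2" M] by (simp only: add_0)
  have "((\<lambda>M. sqrt ((norm p)\<^sup>2 + M)) has_real_derivative inverse (sqrt ((norm p)\<^sup>2 + M)) / 2 * 1) (at M)"
    by (rule DERIV_chain2[OF DERIV_real_sqrt[OF pos] d1])
  then have "(omega p has_real_derivative inverse (omega p M) / 2 * 1) (at M)"
    unfolding omega_def[abs_def] .
  moreover have "inverse (omega p M) / 2 * 1 = 1 / (2 * omega p M)"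
    by (simp add: inverse_eq_divide)
  ultimately show ?thesis by (simp only:)
qed


lemma cont_aux:
  assumes "m > 0" "\<delta> > 0" "0 < a" "\<And>M. M \<in> S \<Longrightarrow> a \<le> M"
  shows "continuous_on S (\<lambda>M. dphi m \<delta> M * cos (omega p M * t))"
    and "continuous_on S (ff m \<delta> t p)"
    and "continuous_on S (phi_lead m \<delta>)"
proof -
  have pos: "\<And>M. M \<in> S \<Longrightarrow> M > 0" using assms by force
  have pos2: "\<And>M. M \<in> S \<Longrightarrow> M * \<delta> / (4 * m\<^sup>2) > 0" using pos assms by simp
  have op: "\<And>M. M \<in> S \<Longrightarrow> omega p M > 0" using pos omega_pos by blast
  have "continuous_on S (omega p)" unfolding omega_def[abs_def]
    by (intro continuous_intros)
  show "continuous_on S (phi_lead m \<delta>)" unfolding phi_lead_def[abs_def]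
    using pos2 pos by (intro continuous_intros) (auto simp: add_nonneg_pos)
  show "continuous_on S (\<lambda>M. dphi m \<delta> M * cos (omega p M * t))" unfolding dphi_def[abs_def]
    using pos2 pos \<open>continuous_on S (omega p)\<close> by (intro continuous_intros) (auto simp: add_nonneg_pos)
  show "continuous_on S (ff m \<delta> t p)" unfolding ff_def[abs_def]
    using \<open>continuous_on S (omega p)\<close> \<open>continuous_on S (phi_lead m \<delta>)\<close>
    by (intro continuous_intros) (auto dest!: op)
qed

lemma GG_deriv:
  assumes "m > 0" "\<delta> > 0" "t > 0" "M > 0"
  shows "(GG m \<delta> t p has_real_derivative (ff m \<delta> t p M - (2/t) * (dphi m \<delta> M * cos (omega p M * t)))) (at M)"
proof -
  have op: "omega p M > 0" using omega_pos assms by blast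
  have "((\<lambda>M. -(2/t) * phi_lead m \<delta> M * cos (omega p M * t)) has_real_derivative
     (-(2/t) * dphi m \<delta> M * cos (omega p M * t) + -(2/t) * phi_lead m \<delta> M * (- sin (omega p M * t) * (1 / (2 * omega p M) * t)))) (at M)"
    using phi_deriv[OF assms(1,2,4)] omega_deriv[OF assms(4), of p]
    apply (auto intro!: derivative_eq_intros)
    using op assms by (simp add: field_simps)
  moreover have "-(2/t) * dphi m \<delta> M * cos (omega p M * t) + -(2/t) * phi_lead m \<delta> M * (- sin (omega p M * t) * (1 / (2 * omega p M) * t))
     = ff m \<delta> t p M - (2/t) * (dphi m \<delta> M * cos (omega p M * t))"
    using op assms unfolding ff_def by (simp add: field_simps)
  ultimately show ?thesis unfolding GG_def[abs_def] by (simp only:)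
qed

lemma ibp:
  assumes "m > 0" "\<delta> > 0" "t > 0" "4 * m\<^sup>2 \<le> K1" "K1 \<le> K2"
  shows "integral {K1..K2} (ff m \<delta> t p) = GG m \<delta> t p K2 - GG m \<delta> t p K1
           + (2/t) * integral {K1..K2} (\<lambda>M. dphi m \<delta> M * cos (omega p M * t))"
proof -
  have a: "4 * m\<^sup>2 > 0" using assms by simp
  have pos: "M > 0" if "M \<in> {K1..K2}" for M
  proof -
    have "K1 \<le> M" using that by simp
    then show ?thesis using assms(4) a by linarith
  qed
  have "((\<lambda>M. ff m \<delta> t p M - (2/t) * (dphi m \<delta> M * cos (omega p M * t))) has_integral
           GG m \<delta> t p K2 - GG m \<delta> t p K1) {K1..K2}"
    apply (rule fundamental_theorem_of_calculus[OF assms(5)])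
    using GG_deriv[OF assms(1-3) pos] 
    by (meson has_real_derivative_iff_has_vector_derivative has_vector_derivative_at_within)
  moreover have "((\<lambda>M. (2/t) * (dphi m \<delta> M * cos (omega p M * t))) has_integral
       (2/t) * integral {K1..K2} (\<lambda>M. dphi m \<delta> M * cos (omega p M * t))) {K1..K2}"
    apply (intro has_integral_mult_right integrable_integral integrable_continuous_interval)
    by (rule cont_aux(1)[OF assms(1,2) a]) (use assms a in auto)
  ultimately have "((\<lambda>M. ff m \<delta> t p M - (2/t) * (dphi m \<delta> M * cos (omega p M * t)) + (2/t) * (dphi m \<delta> M * cos (omega p M * t))) has_integral
           GG m \<delta> t p K2 - GG m \<delta> t p K1 + (2/t) * integral {K1..K2} (\<lambda>M. dphi m \<delta> M * cos (omega p M * t))) {K1..K2}"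
    by (rule has_integral_add)
  then show ?thesis by (simp add: integral_unique)
qed


lemma dphi_sign:
  assumes "m > 0" "\<delta> > 0" "M > 0"
  shows "M \<ge> 4 * m\<^sup>2 / \<delta> \<Longrightarrow> dphi m \<delta> M \<ge> 0"
    and "M \<le> 4 * m\<^sup>2 / \<delta> \<Longrightarrow> dphi m \<delta> M \<le> 0"
proof -
  have den: "M * ((ln (M * \<delta> / (4 * m\<^sup>2)))\<^sup>2 + pi\<^sup>2)\<^sup>2 > 0"
    using assms by (simp add: add_nonneg_pos)
  have a: "4 * m\<^sup>2 > 0" using assms by simp
  assume "M \<ge> 4 * m\<^sup>2 / \<delta>"
  then have "M * \<delta> / (4 * m\<^sup>2) \<ge> 1" using assms a by (simp add: field_simps)
  then have "ln (M * \<delta> / (4 * m\<^sup>2)) \<ge> 0" by simp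
  then show "dphi m \<delta> M \<ge> 0" unfolding dphi_def using den by simp
next
  have den: "M * ((ln (M * \<delta> / (4 * m\<^sup>2)))\<^sup>2 + pi\<^sup>2)\<^sup>2 > 0"
    using assms by (simp add: add_nonneg_pos)
  have a: "4 * m\<^sup>2 > 0" using assms by simp
  assume "M \<le> 4 * m\<^sup>2 / \<delta>"
  then have "M * \<delta> / (4 * m\<^sup>2) \<le> 1" using assms a by (simp add: field_simps)
  moreover have "M * \<delta> / (4 * m\<^sup>2) > 0" using assms a by simp
  ultimately have "ln (M * \<delta> / (4 * m\<^sup>2)) \<le> 0" by simp
  then show "dphi m \<delta> M \<le> 0" unfolding dphi_def using den
    by (simp add: divide_nonpos_pos mult_nonneg_nonpos)
qed

lemma int_dphi:
  assumes "m > 0" "\<delta> > 0" "4 * m\<^sup>2 \<le> K1" "K1 \<le> K2"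
  shows "(dphi m \<delta> has_integral phi_lead m \<delta> K2 - phi_lead m \<delta> K1) {K1..K2}"
proof -
  have a: "4 * m\<^sup>2 > 0" using assms by simp
  have pos: "M > 0" if "M \<in> {K1..K2}" for M
  proof -
    have "K1 \<le> M" using that by simp
    then show ?thesis using assms(3) a by linarith
  qed
  show ?thesis
    apply (rule fundamental_theorem_of_calculus[OF assms(4)])
    using phi_deriv[OF assms(1,2) pos]
    by (meson has_real_derivative_iff_has_vector_derivative has_vector_derivative_at_within)
qed

lemma seg_bound:
  assumes "m > 0" "\<delta> > 0" "t > 0" "4 * m\<^sup>2 \<le> K1" "K1 \<le> K2"
  shows "K1 \<ge> 4 * m\<^sup>2 / \<delta> \<Longrightarrow> \<bar>integral {K1..K2} (ff m \<delta> t p)\<bar> \<le> (4/t) * (- phi_lead m \<delta> K1)"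
    and "K2 \<le> 4 * m\<^sup>2 / \<delta> \<Longrightarrow> \<bar>integral {K1..K2} (ff m \<delta> t p)\<bar> \<le> (4/t) * (- phi_lead m \<delta> K2)"
proof -
  have a: "4 * m\<^sup>2 > 0" using assms by simp
  have pos: "M > 0" if "M \<in> {K1..K2}" for M
  proof -
    have "K1 \<le> M" using that by simp
    then show ?thesis using assms(4) a by linarith
  qed
  let ?h = "\<lambda>M. dphi m \<delta> M * cos (omega p M * t)"
  let ?I = "integral {K1..K2} ?h"
  have eq: "integral {K1..K2} (ff m \<delta> t p) = GG m \<delta> t p K2 - GG m \<delta> t p K1 + (2/t) * ?I"
    by (rule ibp[OF assms])
  have hint: "?h integrable_on {K1..K2}"
    by (rule integrable_continuous_interval, rule cont_aux(1)[OF assms(1,2) a]) (use assms a in auto)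
  have dint: "(dphi m \<delta> has_integral phi_lead m \<delta> K2 - phi_lead m \<delta> K1) {K1..K2}"
    by (rule int_dphi[OF assms(1,2,4,5)])
  have G: "\<bar>GG m \<delta> t p K\<bar> \<le> (2/t) * (- phi_lead m \<delta> K)" for K
  proof -
    have "\<bar>GG m \<delta> t p K\<bar> = (2/t) * \<bar>phi_lead m \<delta> K\<bar> * \<bar>cos (omega p K * t)\<bar>"
      unfolding GG_def using assms(3) by (simp add: abs_mult)
    also have "\<dots> \<le> (2/t) * \<bar>phi_lead m \<delta> K\<bar> * 1"
      by (rule mult_left_mono) (use assms(3) in auto)
    finally show ?thesis using phi_bounds(2)[of m \<delta> K] by simp
  qed
  have main: "\<bar>integral {K1..K2} (ff m \<delta> t p)\<bar> \<le> (2/t) * (- phi_lead m \<delta> K2) + (2/t) * (- phi_lead m \<delta> K1) + (2/t) * \<bar>?I\<bar>"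
  proof -
    have "\<bar>integral {K1..K2} (ff m \<delta> t p)\<bar> \<le> \<bar>GG m \<delta> t p K2\<bar> + \<bar>GG m \<delta> t p K1\<bar> + \<bar>(2/t) * ?I\<bar>"
      unfolding eq by linarith
    also have "\<bar>(2/t) * ?I\<bar> = (2/t) * \<bar>?I\<bar>" using assms(3) by (simp add: abs_mult)
    finally show ?thesis using G[of K1] G[of K2] by linarith
  qed
  show "\<bar>integral {K1..K2} (ff m \<delta> t p)\<bar> \<le> (4/t) * (- phi_lead m \<delta> K1)" if K1: "K1 \<ge> 4 * m\<^sup>2 / \<delta>"
  proof -
    have "norm ?I \<le> integral {K1..K2} (dphi m \<delta>)"
    proof (rule integral_norm_bound_integral[OF hint])
      show "dphi m \<delta> integrable_on {K1..K2}" using dint by blast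
      fix M assume M: "M \<in> {K1..K2}"
      have "dphi m \<delta> M \<ge> 0" using dphi_sign(1)[OF assms(1,2) pos[OF M]] M K1 by auto
      then show "norm (?h M) \<le> dphi m \<delta> M"
        by (simp add: abs_mult mult_left_le)
    qed
    then have "\<bar>?I\<bar> \<le> phi_lead m \<delta> K2 - phi_lead m \<delta> K1" using integral_unique[OF dint] by simp
    then have "(2/t) * \<bar>?I\<bar> \<le> (2/t) * (phi_lead m \<delta> K2 - phi_lead m \<delta> K1)"
      using assms(3) by (intro mult_left_mono) auto
    moreover have "(2/t) * (- phi_lead m \<delta> K2) + (2/t) * (- phi_lead m \<delta> K1) + (2/t) * (phi_lead m \<delta> K2 - phi_lead m \<delta> K1) = (4/t) * (- phi_lead m \<delta> K1)"
      by (simp add: algebra_simps)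
    ultimately show ?thesis using main by linarith
  qed
  show "\<bar>integral {K1..K2} (ff m \<delta> t p)\<bar> \<le> (4/t) * (- phi_lead m \<delta> K2)" if K2: "K2 \<le> 4 * m\<^sup>2 / \<delta>"
  proof -
    have "norm ?I \<le> integral {K1..K2} (\<lambda>M. - dphi m \<delta> M)"
    proof (rule integral_norm_bound_integral[OF hint])
      show "(\<lambda>M. - dphi m \<delta> M) integrable_on {K1..K2}" using dint integrable_neg by blast
      fix M assume M: "M \<in> {K1..K2}"
      have "dphi m \<delta> M \<le> 0" using dphi_sign(2)[OF assms(1,2) pos[OF M]] M K2 by auto
      moreover have "\<bar>cos (omega p M * t)\<bar> \<le> 1" by (rule abs_cos_le_one)
      ultimately have "(- dphi m \<delta> M) * (1 - \<bar>cos (omega p M * t)\<bar>) \<ge> 0"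
        by (intro mult_nonneg_nonneg) auto
      then show "norm (?h M) \<le> - dphi m \<delta> M" using \<open>dphi m \<delta> M \<le> 0\<close>
        by (simp add: abs_mult algebra_simps)
    qed
    then have "\<bar>?I\<bar> \<le> phi_lead m \<delta> K1 - phi_lead m \<delta> K2" using integral_unique[OF has_integral_neg[OF dint]] by simp
    then have "(2/t) * \<bar>?I\<bar> \<le> (2/t) * (phi_lead m \<delta> K1 - phi_lead m \<delta> K2)"
      using assms(3) by (intro mult_left_mono) auto
    moreover have "(2/t) * (- phi_lead m \<delta> K2) + (2/t) * (- phi_lead m \<delta> K1) + (2/t) * (phi_lead m \<delta> K1 - phi_lead m \<delta> K2) = (4/t) * (- phi_lead m \<delta> K2)"
      by (simp add: algebra_simps)
    ultimately show ?thesis using main by linarith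
  qed
qed


lemma mono_bounded_tendsto:
  fixes f :: "real \<Rightarrow> real"
  assumes mono: "\<And>x y. b \<le> x \<Longrightarrow> x \<le> y \<Longrightarrow> f x \<le> f y"
    and bd: "\<And>x. b \<le> x \<Longrightarrow> f x \<le> B"
  shows "\<exists>L. (f \<longlongrightarrow> L) at_top"
proof -
  let ?S = "f ` {b..}"
  have ne: "?S \<noteq> {}" by auto
  have bdd: "bdd_above ?S" using bd by (auto intro!: bdd_aboveI)
  show ?thesis
  proof (intro exI order_tendstoI)
    fix y assume "y < Sup ?S"
    then obtain z where z: "z \<in> ?S" "y < z" using less_cSup_iff[OF ne bdd] by blast
    then obtain x where x: "b \<le> x" "z = f x" by auto
    show "eventually (\<lambda>r. y < f r) at_top"
      using eventually_ge_at_top[of x] by eventually_elim (use mono x z in force)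
  next
    fix y assume "Sup ?S < y"
    show "eventually (\<lambda>r. f r < y) at_top"
      using eventually_ge_at_top[of b]
    proof eventually_elim
      case (elim r)
      then have "f r \<le> Sup ?S" by (intro cSup_upper bdd) auto
      then show ?case using \<open>Sup ?S < y\<close> by linarith
    qed
  qed
qed

lemma C_trunc_ff: "C_trunc m \<delta> t p R = integral {4 * m\<^sup>2..R} (ff m \<delta> t p)"
  unfolding C_trunc_def ff_def[abs_def] ..

lemma crude_bound:
  assumes "m > 0" "\<delta> > 0" "t > 0" "4 * m\<^sup>2 \<le> K"
  shows "\<bar>integral {4 * m\<^sup>2..K} (ff m \<delta> t p)\<bar> \<le> 16 * t * (K - 4 * m\<^sup>2)"
proof -
  have a: "4 * m\<^sup>2 > 0" using assms by simp
  have int: "(ff m \<delta> t p has_integral integral {4 * m\<^sup>2..K} (ff m \<delta> t p)) {4 * m\<^sup>2..K}"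
    by (intro integrable_integral integrable_continuous_interval cont_aux(2)[OF assms(1,2) a]) auto
  have "norm (integral {4 * m\<^sup>2..K} (ff m \<delta> t p)) \<le> (16 * t) * measure lborel {4 * m\<^sup>2..K}"
  proof (rule has_integral_bound_real[OF _ _ int, where S="{}"])
    show "0 \<le> 16 * t" using assms by simp
    fix M assume M: "M \<in> {4 * m\<^sup>2..K} - {}"
    then have "4 * m\<^sup>2 \<le> M" by simp
    then have Mp: "M > 0" using a by linarith
    have op: "omega p M > 0" using omega_pos[OF Mp] .
    have s: "\<bar>sin (omega p M * t)\<bar> \<le> omega p M * t"
      using abs_sin_x_le_abs_x[of "omega p M * t"] op assms(3) by simp
    have "norm (ff m \<delta> t p M) = \<bar>phi_lead m \<delta> M\<bar> * (\<bar>sin (omega p M * t)\<bar> / omega p M)"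
      unfolding ff_def using op by (simp add: abs_mult)
    also have "\<dots> \<le> 16 * t"
    proof (rule mult_mono)
      show "\<bar>phi_lead m \<delta> M\<bar> \<le> 16" using phi_bounds[of m \<delta> M] by linarith
      show "\<bar>sin (omega p M * t)\<bar> / omega p M \<le> t" using s op by (simp add: divide_le_eq mult.commute)
      show "0 \<le> \<bar>sin (omega p M * t)\<bar> / omega p M" using op by simp
    qed auto
    finally show "norm (ff m \<delta> t p M) \<le> 16 * t" .
  qed auto
  then show ?thesis using assms by simp
qed


lemma phi_tendsto:
  assumes "m > 0" "\<delta> > 0"
  shows "(phi_lead m \<delta> \<longlongrightarrow> 0) at_top"
proof -
  have c: "\<delta> / (4 * m\<^sup>2) > 0" using assms by simp
  have "filterlim (\<lambda>M. M * (\<delta> / (4 * m\<^sup>2))) at_top at_top"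
    using c by real_asymp
  then have "filterlim (\<lambda>M. ln (M * (\<delta> / (4 * m\<^sup>2)))) at_top at_top"
    using ln_at_top filterlim_compose by blast
  then have "filterlim (\<lambda>M. (ln (M * (\<delta> / (4 * m\<^sup>2))))\<^sup>2) at_top at_top"
    by (intro filterlim_pow_at_top) auto
  then have "filterlim (\<lambda>M. pi\<^sup>2 + (ln (M * (\<delta> / (4 * m\<^sup>2))))\<^sup>2) at_top at_top"
    by (intro filterlim_tendsto_add_at_top[OF tendsto_const])
  then have "filterlim (\<lambda>M. (ln (M * (\<delta> / (4 * m\<^sup>2))))\<^sup>2 + pi\<^sup>2) at_top at_top"
    by (simp add: add.commute)
  then have "((\<lambda>M. - (16 * pi\<^sup>2) / ((ln (M * (\<delta> / (4 * m\<^sup>2))))\<^sup>2 + pi\<^sup>2)) \<longlongrightarrow> 0) at_top"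
    by (intro tendsto_divide_0[OF tendsto_const] filterlim_at_top_imp_at_infinity)
  then show ?thesis unfolding phi_lead_def[abs_def] by (simp add: mult.assoc)
qed


lemma ff_int:
  assumes "m > 0" "\<delta> > 0" "4 * m\<^sup>2 \<le> K1"
  shows "ff m \<delta> t p integrable_on {K1..K2}"
proof -
  have a: "4 * m\<^sup>2 > 0" using assms by simp
  show ?thesis
    by (rule integrable_continuous_interval, rule cont_aux(2)[OF assms(1,2) a]) (use assms(3) in auto)
qed

lemma global_bound:
  assumes "m > 0" "\<delta> > 0" "t > 0"
  shows "\<bar>integral {4 * m\<^sup>2..R} (ff m \<delta> t p)\<bar> \<le> 128 / t"
proof -
  define a where "a = 4 * m\<^sup>2"
  have a: "a > 0" using assms by (simp add: a_def)
  have six: "(4/t) * (- phi_lead m \<delta> K) \<le> 64 / t" for K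
  proof -
    have "(4/t) * (- phi_lead m \<delta> K) \<le> (4/t) * 16"
      using phi_bounds[of m \<delta> K] assms(3) by (intro mult_left_mono) auto
    then show ?thesis by simp
  qed
  have pt: "0 < 128 / t" using assms by simp
  show ?thesis
  proof (cases "R < a")
    case True then show ?thesis using pt by (simp add: a_def)
  next
    case False
    then have aR: "a \<le> R" by simp
    show ?thesis
    proof (cases "R \<le> a / \<delta>")
      case True
      have "\<bar>integral {a..R} (ff m \<delta> t p)\<bar> \<le> (4/t) * (- phi_lead m \<delta> R)"
        using seg_bound(2)[OF assms, of a R] aR True by (simp add: a_def)
      then show ?thesis using six[of R] unfolding a_def by linarith
    next
      case False
      show ?thesis
      proof (cases "a / \<delta> \<le> a")
        case True
        have "\<bar>integral {a..R} (ff m \<delta> t p)\<bar> \<le> (4/t) * (- phi_lead m \<delta> a)"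
          using seg_bound(1)[OF assms, of a R] aR True by (simp add: a_def)
        then show ?thesis using six[of a] unfolding a_def by linarith
      next
        case False2: False
        have c1: "a \<le> a / \<delta>" "a / \<delta> \<le> R" using False False2 by auto
        have sp: "integral {a..a/\<delta>} (ff m \<delta> t p) + integral {a/\<delta>..R} (ff m \<delta> t p) = integral {a..R} (ff m \<delta> t p)"
          by (rule Henstock_Kurzweil_Integration.integral_combine[OF c1]) (rule ff_int[OF assms(1,2)], simp add: a_def)
        have "\<bar>integral {a..a/\<delta>} (ff m \<delta> t p)\<bar> \<le> (4/t) * (- phi_lead m \<delta> (a/\<delta>))"
          using seg_bound(2)[OF assms, of a "a/\<delta>"] c1 by (simp add: a_def)
        moreover have "\<bar>integral {a/\<delta>..R} (ff m \<delta> t p)\<bar> \<le> (4/t) * (- phi_lead m \<delta> (a/\<delta>))"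
          using seg_bound(1)[OF assms, of "a/\<delta>" R] c1 by (simp add: a_def)
        ultimately show ?thesis using six[of "a/\<delta>"] sp unfolding a_def by linarith
      qed
    qed
  qed
qed

lemma small_bound:
  assumes "m > 0" "\<delta> > 0" "t > 0" "4 * m\<^sup>2 \<le> 1/t" "4 * m\<^sup>2 / \<delta> \<le> 1/t" "1/t \<le> R"
  shows "\<bar>integral {4 * m\<^sup>2..R} (ff m \<delta> t p)\<bar> \<le> 16 + (4/t) * (- phi_lead m \<delta> (1/t))"
proof -
  have sp: "integral {4 * m\<^sup>2..1/t} (ff m \<delta> t p) + integral {1/t..R} (ff m \<delta> t p) = integral {4 * m\<^sup>2..R} (ff m \<delta> t p)"
    by (rule Henstock_Kurzweil_Integration.integral_combine[OF assms(4,6)]) (rule ff_int[OF assms(1,2)], simp)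
  have "\<bar>integral {4 * m\<^sup>2..1/t} (ff m \<delta> t p)\<bar> \<le> 16 * t * (1/t - 4 * m\<^sup>2)"
    by (rule crude_bound[OF assms(1-4)])
  also have "\<dots> \<le> 16 * t * (1/t)"
    using assms by (intro mult_left_mono) auto
  also have "\<dots> = 16" using assms by simp
  finally have h: "\<bar>integral {4 * m\<^sup>2..1/t} (ff m \<delta> t p)\<bar> \<le> 16" .
  have "\<bar>integral {1/t..R} (ff m \<delta> t p)\<bar> \<le> (4/t) * (- phi_lead m \<delta> (1/t))"
    using seg_bound(1)[OF assms(1-4,6) assms(5)] .
  then show ?thesis using h sp by linarith
qed


lemma limit_exists:
  assumes "m > 0" "\<delta> > 0" "t > 0"
  shows "\<exists>L. ((\<lambda>R. integral {4 * m\<^sup>2..R} (ff m \<delta> t p)) \<longlongrightarrow> L) at_top"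
proof -
  define a where "a = 4 * m\<^sup>2"
  define b where "b = max a (a / \<delta>)"
  have a: "a > 0" using assms by (simp add: a_def)
  have ab: "a \<le> b" "a / \<delta> \<le> b" by (auto simp: b_def)
  let ?h = "\<lambda>M. dphi m \<delta> M * cos (omega p M * t)"
  let ?k = "\<lambda>M. ?h M + dphi m \<delta> M"
  define J where "J R = integral {b..R} ?k" for R
  have pos: "M > 0" if "b \<le> M" for M using that ab a by linarith
  have dnn: "dphi m \<delta> M \<ge> 0" if "b \<le> M" for M
    using dphi_sign(1)[OF assms(1,2) pos[OF that]] that ab by (auto simp: a_def)
  have knn: "?k M \<ge> 0" if "b \<le> M" for M
  proof -
    have "\<bar>?h M\<bar> \<le> dphi m \<delta> M"
      using dnn[OF that] by (simp add: abs_mult mult_left_le)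
    then show ?thesis by linarith
  qed
  have hint: "?h integrable_on {x..y}" if "b \<le> x" for x y
    by (rule integrable_continuous_interval, rule cont_aux(1)[OF assms(1,2) a]) (use that ab in auto)
  have dint: "(dphi m \<delta> has_integral phi_lead m \<delta> y - phi_lead m \<delta> x) {x..y}" if "b \<le> x" "x \<le> y" for x y
    by (rule int_dphi[OF assms(1,2)]) (use that ab in \<open>auto simp: a_def\<close>)
  have kint: "?k integrable_on {x..y}" if "b \<le> x" for x y
  proof (cases "x \<le> y")
    case True
    then show ?thesis using hint[OF that] dint[OF that True] by (intro integrable_add) auto
  next
    case False
    then show ?thesis by (simp add: integrable_on_empty)
  qed
  have Jmono: "J x \<le> J y" if "b \<le> x" "x \<le> y" for x y
  proof -
    have "J x + integral {x..y} ?k = J y" unfolding J_def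
      by (rule Henstock_Kurzweil_Integration.integral_combine) (use that kint in auto)
    moreover have "integral {x..y} ?k \<ge> 0"
      by (rule Henstock_Kurzweil_Integration.integral_nonneg[OF kint[OF that(1)]]) (use that knn in auto)
    ultimately show ?thesis by linarith
  qed
  have Jbd: "J x \<le> 32" if "b \<le> x" for x
  proof -
    have "J x \<le> integral {b..x} (\<lambda>M. 2 * dphi m \<delta> M)" unfolding J_def
    proof (rule integral_le[OF kint])
      show "(\<lambda>M. 2 * dphi m \<delta> M) integrable_on {b..x}"
        using has_integral_mult_right[OF dint[OF order_refl that], of 2] by blast
      fix M assume "M \<in> {b..x}"
      then have "b \<le> M" by simp
      have "\<bar>?h M\<bar> \<le> dphi m \<delta> M"
        using dnn[OF \<open>b \<le> M\<close>] by (simp add: abs_mult mult_left_le)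
      then show "?k M \<le> 2 * dphi m \<delta> M" by linarith
    qed auto
    also have "\<dots> = 2 * (phi_lead m \<delta> x - phi_lead m \<delta> b)"
      using integral_unique[OF has_integral_mult_right[OF dint[OF order_refl that], of 2]] by simp
    also have "\<dots> \<le> 32" using phi_bounds[of m \<delta> x] phi_bounds[of m \<delta> b] unfolding right_diff_distrib by linarith
    finally show ?thesis .
  qed
  obtain LJ where LJ: "(J \<longlongrightarrow> LJ) at_top"
    using mono_bounded_tendsto[of b J 32] Jmono Jbd by blast
  have phi0: "(phi_lead m \<delta> \<longlongrightarrow> 0) at_top" by (rule phi_tendsto[OF assms(1,2)])
  have GG0: "(GG m \<delta> t p \<longlongrightarrow> 0) at_top"
  proof (rule Lim_null_comparison)
    show "eventually (\<lambda>R. norm (GG m \<delta> t p R) \<le> (2/t) * \<bar>phi_lead m \<delta> R\<bar>) at_top"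
    proof (intro always_eventually allI)
      fix R
      have "norm (GG m \<delta> t p R) = (2/t) * \<bar>phi_lead m \<delta> R\<bar> * \<bar>cos (omega p R * t)\<bar>"
        unfolding GG_def using assms(3) by (simp add: abs_mult)
      also have "\<dots> \<le> (2/t) * \<bar>phi_lead m \<delta> R\<bar> * 1"
        by (rule mult_left_mono) (use assms(3) in auto)
      finally show "norm (GG m \<delta> t p R) \<le> (2/t) * \<bar>phi_lead m \<delta> R\<bar>" by simp
    qed
    show "((\<lambda>R. (2/t) * \<bar>phi_lead m \<delta> R\<bar>) \<longlongrightarrow> 0) at_top"
      using tendsto_mult_right_zero[OF tendsto_rabs_zero[OF phi0], of "2/t"] .
  qed
  define E where "E R = integral {a..b} (ff m \<delta> t p) + GG m \<delta> t p R - GG m \<delta> t p b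
      + (2/t) * (J R - (phi_lead m \<delta> R - phi_lead m \<delta> b))" for R
  have "(E \<longlongrightarrow> integral {a..b} (ff m \<delta> t p) + 0 - GG m \<delta> t p b
      + (2/t) * (LJ - (0 - phi_lead m \<delta> b))) at_top"
    unfolding E_def by (intro tendsto_intros GG0 LJ phi0)
  moreover have "eventually (\<lambda>R. E R = integral {a..R} (ff m \<delta> t p)) at_top"
    using eventually_ge_at_top[of b]
  proof eventually_elim
    case (elim R)
    have sp: "integral {a..b} (ff m \<delta> t p) + integral {b..R} (ff m \<delta> t p) = integral {a..R} (ff m \<delta> t p)"
      by (rule Henstock_Kurzweil_Integration.integral_combine[OF ab(1) elim]) (rule ff_int[OF assms(1,2)], simp add: a_def)
    have ib: "integral {b..R} (ff m \<delta> t p) = GG m \<delta> t p R - GG m \<delta> t p b + (2/t) * integral {b..R} ?h"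
      by (rule ibp[OF assms]) (use ab elim in \<open>auto simp: a_def\<close>)
    have "J R = integral {b..R} ?h + integral {b..R} (dphi m \<delta>)" unfolding J_def
      by (rule integral_add) (use hint dint[OF order_refl elim] in auto)
    also have "integral {b..R} (dphi m \<delta>) = phi_lead m \<delta> R - phi_lead m \<delta> b"
      by (rule integral_unique[OF dint[OF order_refl elim]])
    finally have "integral {b..R} ?h = J R - (phi_lead m \<delta> R - phi_lead m \<delta> b)" by simp
    then show ?case unfolding E_def using sp ib by simp
  qed
  ultimately show ?thesis unfolding a_def by (blast intro: Lim_transform_eventually)
qed


lemma C_fun_lim:
  assumes "m > 0" "\<delta> > 0" "t > 0"
  shows "((\<lambda>R. C_trunc m \<delta> t p R) \<longlongrightarrow> - C_fun m \<delta> t p) at_top"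
proof -
  obtain L where L: "((\<lambda>R. integral {4 * m\<^sup>2..R} (ff m \<delta> t p)) \<longlongrightarrow> L) at_top"
    using limit_exists[OF assms] by blast
  then have L': "((\<lambda>R. C_trunc m \<delta> t p R) \<longlongrightarrow> L) at_top" unfolding C_trunc_ff .
  then have "Lim at_top (\<lambda>R. C_trunc m \<delta> t p R) = L" by (intro tendsto_Lim) auto
  then show ?thesis using L' unfolding C_fun_def by simp
qed

lemma C_trunc_zero: "C_trunc m \<delta> 0 p R = 0"
  unfolding C_trunc_def by simp

lemma C_fun_zero: "C_fun m \<delta> 0 p = 0"
proof -
  have "Lim at_top (\<lambda>R. C_trunc m \<delta> 0 p R) = 0"
    unfolding C_trunc_zero by (intro tendsto_Lim) auto
  then show ?thesis unfolding C_fun_def by simp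
qed

lemma C_fun_bound_gen:
  assumes "m > 0" "\<delta> > 0" "t > 0" "\<And>R. R \<ge> R0 \<Longrightarrow> \<bar>C_trunc m \<delta> t p R\<bar> \<le> B"
  shows "\<bar>C_fun m \<delta> t p\<bar> \<le> B"
proof -
  have "((\<lambda>R. \<bar>C_trunc m \<delta> t p R\<bar>) \<longlongrightarrow> \<bar>- C_fun m \<delta> t p\<bar>) at_top"
    by (intro tendsto_rabs C_fun_lim[OF assms(1-3)])
  moreover have "eventually (\<lambda>R. B \<ge> \<bar>C_trunc m \<delta> t p R\<bar>) at_top"
    using eventually_ge_at_top[of R0] by eventually_elim (use assms(4) in auto)
  ultimately have "B \<ge> \<bar>- C_fun m \<delta> t p\<bar>" by (rule tendsto_upperbound) auto
  then show ?thesis by simp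
qed

lemma C_fun_bound1:
  assumes "m > 0" "\<delta> > 0" "t > 0"
  shows "\<bar>C_fun m \<delta> t p\<bar> \<le> 128 / t"
  by (rule C_fun_bound_gen[OF assms, of 0]) (use global_bound[OF assms] in \<open>simp add: C_trunc_ff\<close>)

lemma C_fun_bound2:
  assumes "m > 0" "\<delta> > 0" "t > 0" "t \<le> 1 / max (4 * m\<^sup>2) (4 * m\<^sup>2 / \<delta>)"
  shows "\<bar>C_fun m \<delta> t p\<bar> \<le> 16 + (4/t) * (- phi_lead m \<delta> (1/t))"
proof -
  have bp: "max (4 * m\<^sup>2) (4 * m\<^sup>2 / \<delta>) > 0" using assms by (simp add: less_max_iff_disj)
  have gen: "B \<le> 1/t" if "t \<le> 1/B" "B > 0" "t > 0" for B t :: real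
    using that by (simp add: field_simps)
  have "max (4 * m\<^sup>2) (4 * m\<^sup>2 / \<delta>) \<le> 1/t"
    by (rule gen[OF assms(4) bp assms(3)])
  then have c: "4 * m\<^sup>2 \<le> 1/t" "4 * m\<^sup>2 / \<delta> \<le> 1/t" by auto
  show ?thesis
    by (rule C_fun_bound_gen[OF assms(1-3), of "1/t"]) (use small_bound[OF assms(1-3) c] in \<open>simp add: C_trunc_ff\<close>)
qed


definition hb :: "real \<Rightarrow> real \<Rightarrow> real \<Rightarrow> real" where
  "hb m \<delta> t = 16 + (4/t) * (- phi_lead m \<delta> (1/t))"

definition HH :: "real \<Rightarrow> real \<Rightarrow> real \<Rightarrow> real" where
  "HH m \<delta> t = (if t = 0 then - 32 * pi\<^sup>2 else 16 * t - 64 * pi * arctan (ln (1/t * \<delta> / (4 * m\<^sup>2)) / pi))"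

lemma HH_deriv:
  assumes "m > 0" "\<delta> > 0" "t > 0"
  shows "(HH m \<delta> has_real_derivative hb m \<delta> t) (at t)"
proof -
  let ?F = "\<lambda>t. 16 * t - 64 * pi * arctan (ln (1/t * \<delta> / (4 * m\<^sup>2)) / pi)"
  have ev: "eventually (\<lambda>x. HH m \<delta> x = ?F x) (nhds t)"
  proof -
    have "eventually (\<lambda>x. x \<noteq> 0) (nhds t)" using t1_space_nhds[of t 0] assms(3) by simp
    then show ?thesis by eventually_elim (simp add: HH_def)
  qed
  have pos: "1/t * \<delta> / (4 * m\<^sup>2) > 0" using assms by simp
  have "(?F has_real_derivative hb m \<delta> t) (at t)"
    using assms pos
    apply (auto intro!: derivative_eq_intros simp: hb_def phi_lead_def)
    apply (simp add: inverse_eq_divide power_divide field_simps add_pos_nonneg)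
    done
  then show ?thesis using DERIV_cong_ev[OF refl ev refl] by simp
qed


lemma HH_right0:
  assumes "m > 0" "\<delta> > 0"
  shows "(HH m \<delta> \<longlongrightarrow> HH m \<delta> 0) (at_right 0)"
proof -
  have c: "\<delta> / (4 * m\<^sup>2) > 0" using assms by simp
  have f1: "filterlim (\<lambda>t. (\<delta> / (4 * m\<^sup>2)) * inverse t) at_top (at_right (0::real))"
    by (rule filterlim_tendsto_pos_mult_at_top[OF tendsto_const c filterlim_inverse_at_top_right])
  have f2: "filterlim (\<lambda>t. ln ((\<delta> / (4 * m\<^sup>2)) * inverse t)) at_top (at_right (0::real))"
    by (rule filterlim_compose[OF ln_at_top f1])
  have f3: "filterlim (\<lambda>t. inverse pi * ln ((\<delta> / (4 * m\<^sup>2)) * inverse t)) at_top (at_right (0::real))"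
    by (rule filterlim_tendsto_pos_mult_at_top[OF tendsto_const _ f2]) simp
  have eqf: "(\<lambda>t. inverse pi * ln ((\<delta> / (4 * m\<^sup>2)) * inverse t)) = (\<lambda>t. ln (1/t * \<delta> / (4 * m\<^sup>2)) / pi)"
    by (rule ext) (simp add: field_simps)
  have "filterlim (\<lambda>t. ln (1/t * \<delta> / (4 * m\<^sup>2)) / pi) at_top (at_right 0)"
    using f3 unfolding eqf .
  then have "((\<lambda>t. arctan (ln (1/t * \<delta> / (4 * m\<^sup>2)) / pi)) \<longlongrightarrow> pi/2) (at_right 0)"
    by (rule filterlim_compose[OF tendsto_arctan_at_top])
  then have lim: "((\<lambda>t. 16 * t - 64 * pi * arctan (ln (1/t * \<delta> / (4 * m\<^sup>2)) / pi)) \<longlongrightarrow> 16 * 0 - 64 * pi * (pi/2)) (at_right 0)"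
    by (intro tendsto_intros) auto
  have eq: "16 * 0 - 64 * pi * (pi/2) = HH m \<delta> 0" by (simp add: HH_def power2_eq_square)
  have ev: "eventually (\<lambda>t. 16 * t - 64 * pi * arctan (ln (1/t * \<delta> / (4 * m\<^sup>2)) / pi) = HH m \<delta> t) (at_right 0)"
    using eventually_at_right_less[of 0] by eventually_elim (simp add: HH_def)
  show ?thesis using Lim_transform_eventually[OF lim ev] unfolding eq .
qed

lemma HH_isCont:
  assumes "m > 0" "\<delta> > 0" "t > 0"
  shows "isCont (HH m \<delta>) t"
  using HH_deriv[OF assms] DERIV_isCont by blast

lemma hb_integral:
  assumes "m > 0" "\<delta> > 0" "\<tau> > 0"
  shows "(hb m \<delta> has_integral HH m \<delta> \<tau> - HH m \<delta> 0) {0..\<tau>}"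
proof (rule fundamental_theorem_of_calculus_interior)
  show "0 \<le> \<tau>" using assms by simp
  show "continuous_on {0..\<tau>} (HH m \<delta>)"
  proof (rule continuous_on_IccI)
    show "(HH m \<delta> \<longlongrightarrow> HH m \<delta> 0) (at_right 0)" by (rule HH_right0[OF assms(1,2)])
    show "(HH m \<delta> \<longlongrightarrow> HH m \<delta> \<tau>) (at_left \<tau>)"
      using HH_isCont[OF assms] by (simp add: isCont_def filterlim_at_split)
    fix x assume "0 < x" "x < \<tau>"
    then show "(HH m \<delta> \<longlongrightarrow> HH m \<delta> x) (at x)" using HH_isCont[OF assms(1,2)] isCont_def by blast
  qed (use assms in auto)
  fix x assume "x \<in> {0<..<\<tau>}"
  then show "(HH m \<delta> has_vector_derivative hb m \<delta> x) (at x)"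
    using HH_deriv[OF assms(1,2)] has_real_derivative_iff_has_vector_derivative by auto
qed

lemma hb_nonneg: "t \<ge> 0 \<Longrightarrow> hb m \<delta> t \<ge> 0"
proof -
  assume "t \<ge> 0"
  then have "(4/t) * (- phi_lead m \<delta> (1/t)) \<ge> 0" using phi_bounds(2)[of m \<delta> "1/t"]
    by (intro mult_nonneg_nonneg) auto
  then show ?thesis unfolding hb_def by simp
qed


lemma borel_to_lebesgue_on:
  fixes f :: "real \<Rightarrow> real"
  assumes "f \<in> borel_measurable borel"
  shows "f \<in> borel_measurable (lebesgue_on S)"
proof -
  have "f \<in> borel_measurable lborel" using assms by simp
  then have "f \<in> borel_measurable lebesgue" by (rule measurable_completion)
  then show ?thesis by (rule measurable_restrict_space1)
qed

lemma C_trunc_meas: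
  assumes "m > 0" "\<delta> > 0"
  shows "(\<lambda>t. C_trunc m \<delta> t p R) \<in> borel_measurable borel"
proof -
  have a: "4 * m\<^sup>2 > 0" using assms by simp
  have eq: "C_trunc m \<delta> t p R = (LINT M : {4 * m\<^sup>2..R} | lborel. ff m \<delta> t p M)" for t
  proof -
    have "set_integrable lborel {4 * m\<^sup>2..R} (ff m \<delta> t p)"
      unfolding set_integrable_def
      by (rule borel_integrable_compact[OF compact_Icc], rule cont_aux(2)[OF assms a]) auto
    then show ?thesis unfolding C_trunc_ff using set_borel_integral_eq_integral(2) by metis
  qed
  have "(\<lambda>t. (LINT M : {4 * m\<^sup>2..R} | lborel. ff m \<delta> t p M)) \<in> borel_measurable borel"
    unfolding set_lebesgue_integral_def
  proof (rule lborel.borel_measurable_lebesgue_integral)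
    show "case_prod (\<lambda>t M. indicator {4 * m\<^sup>2..R} M *\<^sub>R ff m \<delta> t p M) \<in> borel_measurable (borel \<Otimes>\<^sub>M lborel)"
      unfolding ff_def phi_lead_def omega_def by measurable
  qed
  then show ?thesis unfolding eq .
qed

lemma C_fun_meas:
  assumes "m > 0" "\<delta> > 0"
  shows "(\<lambda>t. C_fun m \<delta> t p) \<in> borel_measurable (lebesgue_on {0..\<tau>})"
proof (rule borel_measurable_LIMSEQ_real[where u="\<lambda>i t. - C_trunc m \<delta> t p (real i)"])
  fix t assume "t \<in> space (lebesgue_on {0..\<tau>})"
  then have t: "t \<ge> 0" by simp
  show "(\<lambda>i. - C_trunc m \<delta> t p (real i)) \<longlonglongrightarrow> C_fun m \<delta> t p"
  proof (cases "t = 0")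
    case True
    then show ?thesis by (simp add: C_trunc_zero C_fun_zero)
  next
    case False
    then have "t > 0" using t by simp
    have "(\<lambda>i. C_trunc m \<delta> t p (real i)) \<longlonglongrightarrow> - C_fun m \<delta> t p"
      by (rule filterlim_compose[OF C_fun_lim[OF assms \<open>t > 0\<close>] filterlim_real_sequentially])
    then show ?thesis using tendsto_minus by fastforce
  qed
next
  fix i
  show "(\<lambda>t. - C_trunc m \<delta> t p (real i)) \<in> borel_measurable (lebesgue_on {0..\<tau>})"
    by (rule borel_to_lebesgue_on) (intro borel_measurable_uminus C_trunc_meas[OF assms])
qed


theorem lemma4p12:
  fixes m \<delta> :: real
  assumes "m > 0" and "\<delta> > 0"
  shows "(\<forall>t>0. \<forall>p. \<exists>L. ((\<lambda>R. C_trunc m \<delta> t p R) \<longlongrightarrow> L) at_top)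
    \<and> (\<exists>C0>0. \<forall>t>0. \<forall>p. \<bar>C_fun m \<delta> t p\<bar> \<le> C0 / t)
    \<and> (\<exists>\<tau>>0. (\<forall>p. (\<lambda>t. C_fun m \<delta> t p) absolutely_integrable_on {0..\<tau>})
              \<and> (\<exists>B. \<forall>p. integral {0..\<tau>} (\<lambda>t. \<bar>C_fun m \<delta> t p\<bar>) \<le> B))"
proof (intro conjI)
  show "\<forall>t>0. \<forall>p. \<exists>L. ((\<lambda>R. C_trunc m \<delta> t p R) \<longlongrightarrow> L) at_top"
    using C_fun_lim[OF assms] by blast
  show "\<exists>C0>0. \<forall>t>0. \<forall>p. \<bar>C_fun m \<delta> t p\<bar> \<le> C0 / t"
    by (rule exI[of _ 128]) (use C_fun_bound1[OF assms] in auto)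
  define \<tau> where "\<tau> = 1 / max (4 * m\<^sup>2) (4 * m\<^sup>2 / \<delta>)"
  have tp: "\<tau> > 0" unfolding \<tau>_def using assms by (simp add: less_max_iff_disj)
  have hint: "(hb m \<delta> has_integral HH m \<delta> \<tau> - HH m \<delta> 0) {0..\<tau>}"
    by (rule hb_integral[OF assms tp])
  have bnd: "norm (C_fun m \<delta> t p) \<le> hb m \<delta> t" if "t \<in> {0..\<tau>}" for t p
  proof (cases "t = 0")
    case True
    then show ?thesis using hb_nonneg[of 0 m \<delta>] by (simp add: C_fun_zero)
  next
    case False
    then have "t > 0" "t \<le> \<tau>" using that by auto
    then show ?thesis using C_fun_bound2[OF assms \<open>t > 0\<close>] unfolding \<tau>_def hb_def by simp
  qed
  have ai: "(\<lambda>t. C_fun m \<delta> t p) absolutely_integrable_on {0..\<tau>}" for p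
    by (rule measurable_bounded_by_integrable_imp_absolutely_integrable[OF C_fun_meas[OF assms] _ _ bnd])
       (use hint in auto)
  have "integral {0..\<tau>} (\<lambda>t. \<bar>C_fun m \<delta> t p\<bar>) \<le> HH m \<delta> \<tau> - HH m \<delta> 0" for p
  proof -
    have "integral {0..\<tau>} (\<lambda>t. \<bar>C_fun m \<delta> t p\<bar>) \<le> integral {0..\<tau>} (hb m \<delta>)"
    proof (rule integral_le)
      show "(\<lambda>t. \<bar>C_fun m \<delta> t p\<bar>) integrable_on {0..\<tau>}"
        using ai[of p] unfolding absolutely_integrable_on_def by simp
      show "hb m \<delta> integrable_on {0..\<tau>}" using hint by blast
      fix t assume "t \<in> {0..\<tau>}"
      then show "\<bar>C_fun m \<delta> t p\<bar> \<le> hb m \<delta> t" using bnd by simp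
    qed
    then show ?thesis using integral_unique[OF hint] by simp
  qed
  then show "\<exists>\<tau>>0. (\<forall>p. (\<lambda>t. C_fun m \<delta> t p) absolutely_integrable_on {0..\<tau>})
              \<and> (\<exists>B. \<forall>p. integral {0..\<tau>} (\<lambda>t. \<bar>C_fun m \<delta> t p\<bar>) \<le> B)"
    using tp ai by blast
qed

end
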